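(* Suppose $c\ge2\tau^2$. For every $t\ge0$, let $s(t)$ be the largest multiple of $\tau$ with $s(t)\le t$. Then the FedSPS iterates satisfy (pathwise) $$R_t:=\frac1n\sum_{i=1}^n\|\bar x_t-x_t^i\|^2\le\frac1{2n\tau}\sum_{i=1}^n\sum_{j=s(t)}^{t-1}\gamma_j^i\big[F_i(x_j^i,\xi_j^i)-\ell_i^\star\big]$$ (the sum over $j$ being empty, and $R_t=0$, when $t=s(t)$).
   Context: For each $i\in[n]$, $\mathcal D_i$ is a probability distribution on $\Omega_i$, $F_i:\mathbb R^d\times\Omega_i\to\mathbb R$ with $F_i(\cdot,\xi)$ differentiable for $\xi\in\operatorname{supp}(\mathcal D_i)$; $F_i^\star:=\inf_{\xi\in\operatorname{supp}(\mathcal D_i),x}F_i(x,\xi)$ and $\ell_i^\star\le F_i^\star$ are given reals. FedSPS with parameters $c,\gamma_b>0$ and communication period integer $\tau\ge1$: $x_0^i=x_0$; at each $t$, client $i$ draws $\xi_t^i\sim\mathcal D_i$, sets $g_t^i:=\nabla F_i(x_t^i,\xi_t^i)$, $\gamma_t^i:=\min\{\frac{F_i(x_t^i,\xi_t^i)-\ell_i^\star}{c\|g_t^i\|^2},\gamma_b\}$ (first term $+\infty$ if $g_t^i=0$); if $t+1$ is a multiple of $\tau$, $x_{t+1}^i:=\frac1n\sum_j(x_t^j-\gamma_t^jg_t^j)$ for all $i$, else $x_{t+1}^i:=x_t^i-\gamma_t^ig_t^i$. $\bar x_t:=\frac1n\sum_ix_t^i$. *)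

theory Defs
  imports "HOL-Analysis.Analysis"
begin

definition grad :: "('a::euclidean_space \<Rightarrow> real) \<Rightarrow> 'a \<Rightarrow> 'a" where
  "grad f x = (THE g. (f has_derivative (\<lambda>h. g \<bullet> h)) (at x))"

text \<open>Stochastic Polyak step size: min{(f x - l)/(c ||g||^2), gb}, first term +infinity if g = 0.\<close>
definition sps_step :: "real \<Rightarrow> real \<Rightarrow> real \<Rightarrow> ('a::euclidean_space \<Rightarrow> real) \<Rightarrow> 'a \<Rightarrow> real" where
  "sps_step c gb l f x =
     (if grad f x = 0 then gb else min ((f x - l) / (c * (norm (grad f x))\<^sup>2)) gb)"

text \<open>FedSPS iterates x_t^i = fedsps n tau c gb l F xi x0 t i, for clients i < n.
  F i x w = F_i(x, w); l i = ell_i^*; xi t i = sample drawn by client i at time t.\<close>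
primrec fedsps :: "nat \<Rightarrow> nat \<Rightarrow> real \<Rightarrow> real \<Rightarrow> (nat \<Rightarrow> real)
    \<Rightarrow> (nat \<Rightarrow> 'a::euclidean_space \<Rightarrow> 'w \<Rightarrow> real) \<Rightarrow> (nat \<Rightarrow> nat \<Rightarrow> 'w) \<Rightarrow> 'a \<Rightarrow> nat \<Rightarrow> nat \<Rightarrow> 'a" where
  "fedsps n tau c gb l F xi x0 0 = (\<lambda>i. x0)"
| "fedsps n tau c gb l F xi x0 (Suc t) =
     (let x = fedsps n tau c gb l F xi x0 t;
          loc = (\<lambda>j. x j - sps_step c gb (l j) (\<lambda>y. F j y (xi t j)) (x j)
                         *\<^sub>R grad (\<lambda>y. F j y (xi t j)) (x j))
      in if Suc t mod tau = 0 then (\<lambda>i. (1 / real n) *\<^sub>R (\<Sum>j<n. loc j)) else loc)"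

definition fedsps_gamma :: "nat \<Rightarrow> nat \<Rightarrow> real \<Rightarrow> real \<Rightarrow> (nat \<Rightarrow> real)
    \<Rightarrow> (nat \<Rightarrow> 'a::euclidean_space \<Rightarrow> 'w \<Rightarrow> real) \<Rightarrow> (nat \<Rightarrow> nat \<Rightarrow> 'w) \<Rightarrow> 'a \<Rightarrow> nat \<Rightarrow> nat \<Rightarrow> real" where
  "fedsps_gamma n tau c gb l F xi x0 t i =
     sps_step c gb (l i) (\<lambda>y. F i y (xi t i)) (fedsps n tau c gb l F xi x0 t i)"

definition fedsps_avg :: "nat \<Rightarrow> nat \<Rightarrow> real \<Rightarrow> real \<Rightarrow> (nat \<Rightarrow> real)
    \<Rightarrow> (nat \<Rightarrow> 'a::euclidean_space \<Rightarrow> 'w \<Rightarrow> real) \<Rightarrow> (nat \<Rightarrow> nat \<Rightarrow> 'w) \<Rightarrow> 'a \<Rightarrow> nat \<Rightarrow> 'a" where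
  "fedsps_avg n tau c gb l F xi x0 t = (1 / real n) *\<^sub>R (\<Sum>i<n. fedsps n tau c gb l F xi x0 t i)"

end

theory Submission
  imports Defs
begin

lemma norm_sum_sq_le:
  fixes w :: "nat \<Rightarrow> 'a::real_normed_vector"
  shows "(norm (sum w A))\<^sup>2 \<le> real (card A) * (\<Sum>j\<in>A. (norm (w j))\<^sup>2)"
proof -
  have "norm (sum w A) \<le> (\<Sum>j\<in>A. norm (w j))" by (rule norm_sum)
  hence "(norm (sum w A))\<^sup>2 \<le> (\<Sum>j\<in>A. norm (w j))\<^sup>2"
    by (simp add: power_mono)
  also have "\<dots> \<le> (\<Sum>j\<in>A. (norm (w j))\<^sup>2) * real (card A)"
    by (rule sum_squared_le_sum_of_squares)
  finally show ?thesis by (simp add: mult.commute)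
qed

lemma variance_le:
  fixes v :: "nat \<Rightarrow> 'a::real_inner"
  assumes "n \<ge> 1"
  shows "(\<Sum>i<n. (norm (v i - (1 / real n) *\<^sub>R (\<Sum>k<n. v k)))\<^sup>2) \<le> (\<Sum>i<n. (norm (v i))\<^sup>2)"
proof -
  define m where "m = (1 / real n) *\<^sub>R (\<Sum>k<n. v k)"
  have S: "(\<Sum>k<n. v k) = real n *\<^sub>R m" using assms by (simp add: m_def)
  have "(\<Sum>i<n. (norm (v i - m))\<^sup>2) = (\<Sum>i<n. (norm (v i))\<^sup>2 - 2 * (v i \<bullet> m) + (norm m)\<^sup>2)"
    by (rule sum.cong) (auto simp: power2_norm_eq_inner inner_diff_left inner_diff_right inner_commute)
  also have "\<dots> = (\<Sum>i<n. (norm (v i))\<^sup>2) - 2 * ((\<Sum>i<n. v i) \<bullet> m) + real n * (norm m)\<^sup>2"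
    by (simp add: sum.distrib sum_subtractf sum_distrib_left inner_sum_left)
  also have "\<dots> = (\<Sum>i<n. (norm (v i))\<^sup>2) - real n * (norm m)\<^sup>2"
    by (simp add: S power2_norm_eq_inner)
  also have "\<dots> \<le> (\<Sum>i<n. (norm (v i))\<^sup>2)" by simp
  finally show ?thesis by (simp add: m_def)
qed

lemma sps_bound:
  assumes "f x \<ge> l" "c > 0" "gb > 0"
  shows "sps_step c gb l f x \<ge> 0"
    and "(norm (sps_step c gb l f x *\<^sub>R grad f x))\<^sup>2 \<le> sps_step c gb l f x * (f x - l) / c"
proof -
  show g0: "sps_step c gb l f x \<ge> 0"
    using assms by (auto simp: sps_step_def)
  show "(norm (sps_step c gb l f x *\<^sub>R grad f x))\<^sup>2 \<le> sps_step c gb l f x * (f x - l) / c"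
  proof (cases "grad f x = 0")
    case True
    then show ?thesis using assms g0 by simp
  next
    case False
    define g where "g = sps_step c gb l f x"
    define q where "q = (norm (grad f x))\<^sup>2"
    have q: "q > 0" using False by (simp add: q_def)
    have "g \<le> (f x - l) / (c * q)" using False by (simp add: g_def q_def sps_step_def)
    hence "g * q \<le> (f x - l) / c" using q assms by (simp add: field_simps)
    hence "g * (g * q) \<le> g * ((f x - l) / c)"
      using g0 unfolding g_def by (rule mult_left_mono)
    then show ?thesis
      by (simp add: g_def[symmetric] q_def power_mult_distrib power2_eq_square algebra_simps)
  qed
qed

theorem mainTheorem9:
  fixes n tau :: nat and c gb :: real and l :: "nat \<Rightarrow> real"
    and F :: "nat \<Rightarrow> 'a::euclidean_space \<Rightarrow> 'w \<Rightarrow> real"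
    and supp :: "nat \<Rightarrow> 'w set"
    and xi :: "nat \<Rightarrow> nat \<Rightarrow> 'w" and x0 :: 'a and t :: nat
  assumes n_pos: "n \<ge> 1"
    and tau_pos: "tau \<ge> 1"
    and c_pos: "c > 0" and gb_pos: "gb > 0"
    and c_ge: "c \<ge> 2 * (real tau)\<^sup>2"
    and diff: "\<And>i w x. i < n \<Longrightarrow> w \<in> supp i \<Longrightarrow> (\<lambda>y. F i y w) differentiable (at x)"
    and lower: "\<And>i w x. i < n \<Longrightarrow> w \<in> supp i \<Longrightarrow> l i \<le> F i x w"
    and samples: "\<And>s i. i < n \<Longrightarrow> xi s i \<in> supp i"
  shows "(1 / real n) * (\<Sum>i<n. (norm (fedsps_avg n tau c gb l F xi x0 t
                                     - fedsps n tau c gb l F xi x0 t i))\<^sup>2)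
         \<le> (1 / (2 * real n * real tau)) *
           (\<Sum>i<n. \<Sum>j\<in>{(t div tau) * tau..<t}.
              fedsps_gamma n tau c gb l F xi x0 j i
                * (F i (fedsps n tau c gb l F xi x0 j i) (xi j i) - l i))"
proof -
  define X where "X = fedsps n tau c gb l F xi x0"
  define \<gamma> where "\<gamma> = fedsps_gamma n tau c gb l F xi x0"
  define G where "G = (\<lambda>j i. grad (\<lambda>y. F i y (xi j i)) (X j i))"
  define s where "s = (t div tau) * tau"
  have ts: "t = s + t mod tau" by (simp add: s_def)
  have "t mod tau < tau" using tau_pos by simp
  hence tlt: "t < s + tau" using ts by linarith
  have st: "s \<le> t" using ts by linarith
  have step: "X (Suc j) i = X j i - \<gamma> j i *\<^sub>R G j i" if "Suc j mod tau \<noteq> 0" for j i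
    using that by (simp add: X_def \<gamma>_def G_def fedsps_gamma_def Let_def)
  have const: "X s i = X s 0" for i
  proof (cases s)
    case 0 then show ?thesis by (simp add: X_def)
  next
    case (Suc s')
    have "Suc s' mod tau = 0" using Suc s_def by (metis mod_mult_self2_is_0)
    then show ?thesis using Suc by (simp add: X_def Let_def)
  qed
  define v where "v = (\<lambda>i. \<Sum>j\<in>{s..<t}. \<gamma> j i *\<^sub>R G j i)"
  have evol: "X (s + k) i = X s i - (\<Sum>j\<in>{s..<s+k}. \<gamma> j i *\<^sub>R G j i)" if "s + k \<le> t" for k i
    using that
  proof (induction k)
    case 0 then show ?case by simp
  next
    case (Suc k)
    have "Suc (s + k) mod tau \<noteq> 0"
    proof
      assume "Suc (s + k) mod tau = 0"
      then obtain q where q: "Suc (s + k) = tau * q" by auto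
      have "s = tau * (t div tau)" by (simp add: s_def)
      moreover have "tau * (t div tau) < tau * q" using q \<open>s = tau * (t div tau)\<close> by linarith
      hence "t div tau < q" by simp
      hence "tau * (t div tau) + tau \<le> tau * q"
        by (metis Suc_leI mult_Suc_right add.commute mult_le_mono2)
      ultimately show False using q Suc.prems tlt by linarith
    qed
    then have "X (Suc (s + k)) i = X (s + k) i - \<gamma> (s + k) i *\<^sub>R G (s + k) i" by (rule step)
    then show ?case using Suc by simp
  qed
  have Xt: "X t i = X s 0 - v i" for i
    using evol[of "t - s" i] st const[of i] by (simp add: v_def)
  have avg: "fedsps_avg n tau c gb l F xi x0 t = X s 0 - (1 / real n) *\<^sub>R (\<Sum>k<n. v k)"
  proof -
    have "fedsps_avg n tau c gb l F xi x0 t = (1 / real n) *\<^sub>R (\<Sum>i<n. X s 0 - v i)"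
      by (simp add: fedsps_avg_def X_def[symmetric] Xt)
    also have "\<dots> = X s 0 - (1 / real n) *\<^sub>R (\<Sum>k<n. v k)"
      using n_pos by (simp add: sum_subtractf scaleR_diff_right scaleR_scaleR sum_constant_scaleR)
    finally show ?thesis .
  qed
  have diffeq: "fedsps_avg n tau c gb l F xi x0 t - X t i = v i - (1 / real n) *\<^sub>R (\<Sum>k<n. v k)" for i
    by (simp add: avg Xt)
  define P where "P = (\<lambda>j i. \<gamma> j i * (F i (X j i) (xi j i) - l i))"
  have termb: "(norm (\<gamma> j i *\<^sub>R G j i))\<^sup>2 \<le> P j i / c" and Pnn: "P j i \<ge> 0" if "i < n" for i j
  proof -
    have lo: "F i (X j i) (xi j i) \<ge> l i" using lower samples that by blast
    have e: "\<gamma> j i = sps_step c gb (l i) (\<lambda>y. F i y (xi j i)) (X j i)"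
      by (simp add: \<gamma>_def fedsps_gamma_def X_def)
    show "(norm (\<gamma> j i *\<^sub>R G j i))\<^sup>2 \<le> P j i / c"
      using sps_bound(2)[where f="\<lambda>y. F i y (xi j i)" and x="X j i" and l="l i" and c=c and gb=gb] lo c_pos gb_pos
      by (simp add: e P_def G_def)
    show "P j i \<ge> 0"
      using sps_bound(1)[where f="\<lambda>y. F i y (xi j i)" and x="X j i" and l="l i" and c=c and gb=gb] lo c_pos gb_pos
      by (simp add: e P_def)
  qed
  have card: "real (card {s..<t}) \<le> real tau" using tlt by simp
  have vb: "(norm (v i))\<^sup>2 \<le> (\<Sum>j\<in>{s..<t}. P j i) / (2 * real tau)" if "i < n" for i
  proof -
    have "(norm (v i))\<^sup>2 \<le> real (card {s..<t}) * (\<Sum>j\<in>{s..<t}. (norm (\<gamma> j i *\<^sub>R G j i))\<^sup>2)"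
      unfolding v_def by (rule norm_sum_sq_le)
    also have "\<dots> \<le> real tau * (\<Sum>j\<in>{s..<t}. P j i / c)"
      apply (rule mult_mono[OF card sum_mono])
      using termb that by (auto intro: sum_nonneg)
    also have "\<dots> = real tau * (\<Sum>j\<in>{s..<t}. P j i) / c"
      by (simp add: sum_divide_distrib[symmetric])
    also have "\<dots> \<le> real tau * (\<Sum>j\<in>{s..<t}. P j i) / (2 * (real tau)\<^sup>2)"
    proof (rule divide_left_mono)
      show "0 \<le> real tau * (\<Sum>j\<in>{s..<t}. P j i)" using Pnn that by (simp add: sum_nonneg)
      show "2 * (real tau)\<^sup>2 \<le> c" by (rule c_ge)
      show "0 < c * (2 * (real tau)\<^sup>2)" using c_pos tau_pos by simp
    qed
    also have "\<dots> = (\<Sum>j\<in>{s..<t}. P j i) / (2 * real tau)"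
      using tau_pos by (simp add: power2_eq_square)
    finally show ?thesis .
  qed
  have "(\<Sum>i<n. (norm (fedsps_avg n tau c gb l F xi x0 t - X t i))\<^sup>2) \<le> (\<Sum>i<n. (norm (v i))\<^sup>2)"
    unfolding diffeq using variance_le[OF n_pos] .
  also have "\<dots> \<le> (\<Sum>i<n. (\<Sum>j\<in>{s..<t}. P j i) / (2 * real tau))"
    by (rule sum_mono) (use vb in auto)
  also have "\<dots> = (\<Sum>i<n. \<Sum>j\<in>{s..<t}. P j i) / (2 * real tau)"
    by (simp add: sum_divide_distrib)
  finally have main: "(\<Sum>i<n. (norm (fedsps_avg n tau c gb l F xi x0 t - X t i))\<^sup>2)
       \<le> (\<Sum>i<n. \<Sum>j\<in>{s..<t}. P j i) / (2 * real tau)" .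
  have "(1 / real n) * (\<Sum>i<n. (norm (fedsps_avg n tau c gb l F xi x0 t - X t i))\<^sup>2)
     \<le> (1 / real n) * ((\<Sum>i<n. \<Sum>j\<in>{s..<t}. P j i) / (2 * real tau))"
    by (rule mult_left_mono[OF main]) simp
  also have "\<dots> = (1 / (2 * real n * real tau)) * (\<Sum>i<n. \<Sum>j\<in>{s..<t}. P j i)"
    by simp
  finally show ?thesis by (simp add: X_def[symmetric] \<gamma>_def[symmetric] P_def s_def[symmetric])
qed

end
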